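(* Let $T$ be a tree of order at least $3$, let $T^*$ be the twin-free tree associated to $T$, and let $k\geq 1$ be an integer. Then $\gamma_{B_k}(T)=\gamma_{B_k}(T^* )$.
   Context: $d(u,v)$ denotes the distance in the graph. For a connected graph $G$ and an integer $k\ge 1$, a function $f\colon V(G)\to\{0,1,\dots,k\}$ is a dominating $k$-broadcast on $G$ if for every $u\in V(G)$ there is a vertex $v$ with $f(v)\geq 1$ and $d(u,v)\leq f(v)$. Its cost is $\omega(f)=\sum_{u\in V(G)}f(u)$, and $\gamma_{B_k}(G)$ is the minimum cost of a dominating $k$-broadcast on $G$. A leaf is a vertex of degree one, its unique neighbor is a support vertex, and leaves with the same support vertex are twin leaves. For a tree $T$ of order at least 3, the twin-free tree associated to $T$, denoted $T^*$, is the tree obtained from $T$ by deleting all but one of the leaves of every maximal set of pairwise twin leaves. *)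

theory Defs
  imports Main
begin

definition graph :: "'a set \<Rightarrow> ('a \<Rightarrow> 'a \<Rightarrow> bool) \<Rightarrow> bool" where
  "graph V E \<longleftrightarrow> finite V \<and> (\<forall>u v. E u v \<longrightarrow> u \<in> V \<and> v \<in> V \<and> u \<noteq> v \<and> E v u)"

definition walk :: "'a set \<Rightarrow> ('a \<Rightarrow> 'a \<Rightarrow> bool) \<Rightarrow> 'a list \<Rightarrow> bool" where
  "walk V E xs \<longleftrightarrow> xs \<noteq> [] \<and> set xs \<subseteq> V \<and> (\<forall>i. Suc i < length xs \<longrightarrow> E (xs ! i) (xs ! Suc i))"

definition gconnected :: "'a set \<Rightarrow> ('a \<Rightarrow> 'a \<Rightarrow> bool) \<Rightarrow> bool" where
  "gconnected V E \<longleftrightarrow> V \<noteq> {} \<and>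
     (\<forall>u\<in>V. \<forall>v\<in>V. \<exists>xs. walk V E xs \<and> hd xs = u \<and> last xs = v)"

definition edges :: "'a set \<Rightarrow> ('a \<Rightarrow> 'a \<Rightarrow> bool) \<Rightarrow> 'a set set" where
  "edges V E = {{u, v} | u v. u \<in> V \<and> v \<in> V \<and> E u v}"

definition tree :: "'a set \<Rightarrow> ('a \<Rightarrow> 'a \<Rightarrow> bool) \<Rightarrow> bool" where
  "tree V E \<longleftrightarrow> graph V E \<and> gconnected V E \<and> card (edges V E) = card V - 1"

definition gdist :: "'a set \<Rightarrow> ('a \<Rightarrow> 'a \<Rightarrow> bool) \<Rightarrow> 'a \<Rightarrow> 'a \<Rightarrow> nat" where
  "gdist V E u v = (LEAST n. \<exists>xs. walk V E xs \<and> hd xs = u \<and> last xs = v \<and> length xs = Suc n)"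

definition degree :: "'a set \<Rightarrow> ('a \<Rightarrow> 'a \<Rightarrow> bool) \<Rightarrow> 'a \<Rightarrow> nat" where
  "degree V E u = card {v \<in> V. E u v}"

definition leaf :: "'a set \<Rightarrow> ('a \<Rightarrow> 'a \<Rightarrow> bool) \<Rightarrow> 'a \<Rightarrow> bool" where
  "leaf V E u \<longleftrightarrow> u \<in> V \<and> degree V E u = 1"

definition support_vertex :: "'a set \<Rightarrow> ('a \<Rightarrow> 'a \<Rightarrow> bool) \<Rightarrow> 'a \<Rightarrow> bool" where
  "support_vertex V E s \<longleftrightarrow> s \<in> V \<and> (\<exists>l. leaf V E l \<and> E l s)"

definition induced :: "('a \<Rightarrow> 'a \<Rightarrow> bool) \<Rightarrow> 'a set \<Rightarrow> 'a \<Rightarrow> 'a \<Rightarrow> bool" where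
  "induced E W = (\<lambda>u v. E u v \<and> u \<in> W \<and> v \<in> W)"

text \<open>W is the vertex set of a twin-free tree associated to (V,E): all non-leaves are kept,
  and among the leaves of each support vertex (a maximal set of twin leaves) exactly one is kept.
  The resulting tree T* = (W, induced E W) is unique up to isomorphism.\<close>
definition twin_free_vertices :: "'a set \<Rightarrow> ('a \<Rightarrow> 'a \<Rightarrow> bool) \<Rightarrow> 'a set \<Rightarrow> bool" where
  "twin_free_vertices V E W \<longleftrightarrow> W \<subseteq> V \<and>
     (\<forall>v\<in>V. \<not> leaf V E v \<longrightarrow> v \<in> W) \<and>
     (\<forall>s. support_vertex V E s \<longrightarrow> (\<exists>!l. l \<in> W \<and> leaf V E l \<and> E l s))"

definition dominating_k_broadcast ::
  "'a set \<Rightarrow> ('a \<Rightarrow> 'a \<Rightarrow> bool) \<Rightarrow> nat \<Rightarrow> ('a \<Rightarrow> nat) \<Rightarrow> bool" where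
  "dominating_k_broadcast V E k f \<longleftrightarrow>
     (\<forall>v\<in>V. f v \<le> k) \<and>
     (\<forall>u\<in>V. \<exists>v\<in>V. f v \<ge> 1 \<and> gdist V E u v \<le> f v)"

definition broadcast_cost :: "'a set \<Rightarrow> ('a \<Rightarrow> nat) \<Rightarrow> nat" where
  "broadcast_cost V f = (\<Sum>u\<in>V. f u)"

definition gamma_Bk :: "'a set \<Rightarrow> ('a \<Rightarrow> 'a \<Rightarrow> bool) \<Rightarrow> nat \<Rightarrow> nat" where
  "gamma_Bk V E k = (LEAST c. \<exists>f. dominating_k_broadcast V E k f \<and> broadcast_cost V f = c)"

end

theory Submission imports Defs begin


lemma walk_single[simp]: "walk V E [x] \<longleftrightarrow> x \<in> V"
  by (auto simp: walk_def)

lemma walk_Cons2[simp]: "walk V E (x#y#ys) \<longleftrightarrow> x \<in> V \<and> E x y \<and> walk V E (y#ys)"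
proof
  assume w: "walk V E (x#y#ys)"
  have "E ((y#ys)!i) ((y#ys)!Suc i)" if "Suc i < length (y#ys)" for i
    using w that unfolding walk_def by (metis Suc_less_eq length_Cons nth_Cons_Suc)
  then show "x \<in> V \<and> E x y \<and> walk V E (y#ys)" using w unfolding walk_def by force
next
  assume a: "x \<in> V \<and> E x y \<and> walk V E (y#ys)"
  have "E ((x#y#ys)!i) ((x#y#ys)!Suc i)" if "Suc i < length (x#y#ys)" for i
  proof (cases i)
    case 0 then show ?thesis using a by simp
  next
    case (Suc j) then show ?thesis using a that unfolding walk_def by simp
  qed
  then show "walk V E (x#y#ys)" using a unfolding walk_def by auto
qed

lemma walk_nonempty: "walk V E xs \<Longrightarrow> xs \<noteq> []" by (simp add: walk_def)

lemma walk_append: "walk V E xs \<Longrightarrow> walk V E ys \<Longrightarrow> last xs = hd ys \<Longrightarrow> walk V E (xs @ tl ys)"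
proof (induction xs)
  case Nil then show ?case by (simp add: walk_def)
next
  case (Cons x xs)
  show ?case
  proof (cases xs)
    case Nil
    then show ?thesis using Cons.prems by (cases ys) (auto simp: walk_def)
  next
    case (Cons y r)
    then show ?thesis using Cons.prems Cons.IH by auto
  qed
qed

lemma walk_snoc: "walk V E xs \<Longrightarrow> x \<in> V \<Longrightarrow> E (last xs) x \<Longrightarrow> walk V E (xs @ [x])"
proof (induction xs)
  case Nil then show ?case by (simp add: walk_def)
next
  case (Cons a xs)
  then show ?case by (cases xs) auto
qed

lemma walk_rev: "graph V E \<Longrightarrow> walk V E xs \<Longrightarrow> walk V E (rev xs)"
proof (induction xs)
  case Nil then show ?case by (simp add: walk_def)
next
  case (Cons a xs)
  show ?case
  proof (cases xs)
    case Nil then show ?thesis using Cons by simp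
  next
    case (Cons y r)
    have "walk V E (rev (y#r))" using Cons.IH Cons.prems \<open>xs = y#r\<close> by auto
    moreover have "E y a" using Cons.prems \<open>xs = y#r\<close> by (auto simp: graph_def)
    ultimately show ?thesis using Cons.prems \<open>xs = y#r\<close> walk_snoc[of V E "rev (y#r)" a] by auto
  qed
qed

lemma walk_closed: "walk V E xs \<Longrightarrow> hd xs \<in> S \<Longrightarrow> (\<forall>x\<in>S. \<forall>y. E x y \<longrightarrow> y \<in> S) \<Longrightarrow> set xs \<subseteq> S"
proof (induction xs)
  case Nil then show ?case by simp
next
  case (Cons a xs)
  then show ?case by (cases xs) auto
qed

definition dwalk where
  "dwalk V E u v n \<longleftrightarrow> (\<exists>xs. walk V E xs \<and> hd xs = u \<and> last xs = v \<and> length xs = Suc n)"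

lemma gdist_dwalk: "gdist V E u v = (LEAST n. dwalk V E u v n)"
  by (simp add: gdist_def dwalk_def)

lemma gdist_le: "dwalk V E u v n \<Longrightarrow> gdist V E u v \<le> n"
  unfolding gdist_dwalk by (rule Least_le)

lemma dwalk_gdist: "dwalk V E u v n \<Longrightarrow> dwalk V E u v (gdist V E u v)"
  unfolding gdist_dwalk by (rule LeastI)

lemma dwalk_exists: "gconnected V E \<Longrightarrow> u \<in> V \<Longrightarrow> v \<in> V \<Longrightarrow> \<exists>n. dwalk V E u v n"
  unfolding gconnected_def dwalk_def
  by (metis length_greater_0_conv gr0_conv_Suc walk_nonempty)

lemma dwalk_trans: "dwalk V E u v m \<Longrightarrow> dwalk V E v w n \<Longrightarrow> dwalk V E u w (m + n)"
proof -
  assume "dwalk V E u v m" "dwalk V E v w n"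
  then obtain xs ys where x: "walk V E xs" "hd xs = u" "last xs = v" "length xs = Suc m"
    and y: "walk V E ys" "hd ys = v" "last ys = w" "length ys = Suc n"
    unfolding dwalk_def by blast
  have "walk V E (xs @ tl ys)" using walk_append x y by metis
  moreover have "hd (xs @ tl ys) = u" using x walk_nonempty[OF x(1)] by simp
  moreover have "last (xs @ tl ys) = w"
    using x y walk_nonempty by (cases ys; cases "tl ys") auto
  moreover have "length (xs @ tl ys) = Suc (m + n)" using x y by simp
  ultimately show ?thesis unfolding dwalk_def by blast
qed

lemma dwalk_sym: "graph V E \<Longrightarrow> dwalk V E u v n \<longleftrightarrow> dwalk V E v u n"
  unfolding dwalk_def
  by (metis hd_rev last_rev length_rev rev_rev_ident walk_rev)

lemma gdist_sym: assumes "graph V E" shows "gdist V E u v = gdist V E v u"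
proof -
  have "dwalk V E u v = dwalk V E v u" by (intro ext) (simp add: dwalk_sym[OF assms])
  then show ?thesis unfolding gdist_dwalk by simp
qed

lemma gdist_refl: "u \<in> V \<Longrightarrow> gdist V E u u = 0"
proof -
  assume "u \<in> V"
  then have "dwalk V E u u 0" unfolding dwalk_def by (intro exI[of _ "[u]"]) simp
  then show ?thesis using gdist_le by fastforce
qed

lemma gdist_edge: "graph V E \<Longrightarrow> E u s \<Longrightarrow> gdist V E u s \<le> 1"
proof -
  assume "graph V E" "E u s"
  then have "dwalk V E u s 1" unfolding dwalk_def graph_def by (intro exI[of _ "[u,s]"]) auto
  then show ?thesis using gdist_le by fastforce
qed

lemma gdist_triangle:
  assumes "gconnected V E" "u \<in> V" "v \<in> V" "w \<in> V"
  shows "gdist V E u w \<le> gdist V E u v + gdist V E v w"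
  using assms dwalk_exists dwalk_gdist dwalk_trans gdist_le by metis

lemma leaf_unique: "graph V E \<Longrightarrow> leaf V E y \<Longrightarrow> E y a \<Longrightarrow> E y b \<Longrightarrow> a = b"
proof -
  assume g: "graph V E" and l: "leaf V E y" and "E y a" "E y b"
  then have "a \<in> {v\<in>V. E y v}" "b \<in> {v\<in>V. E y v}" by (auto simp: graph_def)
  moreover have "card {v\<in>V. E y v} = 1" using l by (simp add: leaf_def degree_def)
  ultimately show ?thesis by (metis card_1_singletonE singletonD)
qed

lemma leaf_has_nbr: "leaf V E y \<Longrightarrow> \<exists>s. E y s"
  unfolding leaf_def degree_def by (metis (no_types, lifting) card_1_singletonE mem_Collect_eq singletonI)

lemma leaf_dist:
  assumes g: "graph V E" and c: "gconnected V E" and l: "leaf V E v" and e: "E v s"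
    and x: "x \<in> V" "x \<noteq> v"
  shows "gdist V E v x = Suc (gdist V E s x)"
proof -
  have vs: "v \<in> V" "s \<in> V" using g e by (auto simp: graph_def)
  have "gdist V E v x \<le> gdist V E v s + gdist V E s x"
    using gdist_triangle[OF c vs(1) vs(2) x(1)] .
  then have le: "gdist V E v x \<le> Suc (gdist V E s x)" using gdist_edge[OF g e] by simp
  obtain n where "dwalk V E v x n" using dwalk_exists[OF c vs(1) x(1)] by blast
  then have "dwalk V E v x (gdist V E v x)" by (rule dwalk_gdist)
  then obtain xs where xs: "walk V E xs" "hd xs = v" "last xs = x" "length xs = Suc (gdist V E v x)"
    unfolding dwalk_def by blast
  obtain a t where at: "xs = a # t" using walk_nonempty[OF xs(1)] by (cases xs) auto
  have "t \<noteq> []" using at xs(2,3) x(2) by auto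
  then obtain y r where tr: "t = y # r" by (cases t) auto
  have xr: "xs = v # y # r" using at tr xs(2) by simp
  have "E v y" "walk V E (y#r)" using xs(1) xr by auto
  then have "y = s" using leaf_unique[OF g l _ e] by simp
  have "last (y#r) = x" using xs(3) xr by simp
  moreover have "length (y#r) = Suc (gdist V E v x - 1)" using xs(4) xr by simp
  ultimately have "dwalk V E s x (gdist V E v x - 1)"
    unfolding dwalk_def using \<open>walk V E (y#r)\<close> \<open>y = s\<close> by (intro exI[of _ "y#r"]) simp
  then have "gdist V E s x \<le> gdist V E v x - 1" by (rule gdist_le)
  moreover have "gdist V E v x \<ge> 1" using xs(4) xr by simp
  ultimately show ?thesis using le by linarith
qed

lemma leaf_nbr_not_leaf:
  assumes g: "graph V E" and c: "gconnected V E" and V3: "card V \<ge> 3"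
    and l: "leaf V E v" and e: "E v s"
  shows "\<not> leaf V E s"
proof
  assume ls: "leaf V E s"
  have es: "E s v" using g e by (auto simp: graph_def)
  let ?S = "{v, s}"
  have cl: "\<forall>x\<in>?S. \<forall>y. E x y \<longrightarrow> y \<in> ?S"
  proof (intro ballI allI impI)
    fix a b assume "a \<in> ?S" "E a b"
    then show "b \<in> ?S" using leaf_unique[OF g l _ e, of b] leaf_unique[OF g ls _ es, of b] by blast
  qed
  have vV: "v \<in> V" using g e by (auto simp: graph_def)
  have "V \<subseteq> ?S"
  proof
    fix x assume "x \<in> V"
    then obtain xs where "walk V E xs" "hd xs = v" "last xs = x"
      using c vV unfolding gconnected_def by blast
    then have "set xs \<subseteq> ?S" using walk_closed[of V E xs ?S] cl by simp
    then show "x \<in> ?S" using last_in_set[OF walk_nonempty[OF \<open>walk V E xs\<close>]] \<open>last xs = x\<close> by blast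
  qed
  moreover have "card ?S \<le> 2" by (simp add: card_insert_if)
  moreover have "card V \<le> card ?S" using card_mono[OF _ \<open>V \<subseteq> ?S\<close>] by simp
  ultimately have "card V \<le> 2" by linarith
  then show False using V3 by simp
qed



lemma walk_induced_mono: "walk W (induced E W) ys \<Longrightarrow> W \<subseteq> V \<Longrightarrow> walk V E ys"
  by (auto simp: walk_def induced_def)

lemma walk_to_W:
  assumes g: "graph V E" and WV: "W \<subseteq> V" and nl: "\<forall>v\<in>V. \<not> leaf V E v \<longrightarrow> v \<in> W"
  shows "walk V E xs \<Longrightarrow> hd xs \<in> W \<Longrightarrow> last xs \<in> W \<Longrightarrow>
    \<exists>ys. walk W (induced E W) ys \<and> hd ys = hd xs \<and> last ys = last xs \<and> length ys \<le> length xs"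
proof (induction "length xs" arbitrary: xs rule: less_induct)
  case less
  show ?case
  proof (cases xs)
    case Nil then show ?thesis using walk_nonempty[OF less.prems(1)] by blast
  next
    case (Cons x t)
    show ?thesis
    proof (cases t)
      case Nil
      have "x \<in> W" using less.prems(2) \<open>xs = x#t\<close> by simp
      then have "walk W (induced E W) [x]" by simp
      then show ?thesis using \<open>xs = x#t\<close> Nil by (intro exI[of _ "[x]"]) simp
    next
      case (Cons y r)
      have xs: "xs = x#y#r" using \<open>xs = x#t\<close> Cons by simp
      have xy: "x \<in> V" "E x y" "walk V E (y#r)" using less.prems(1) xs by simp_all
      have xW: "x \<in> W" using less.prems(2) xs by simp
      have lastxs: "last xs \<in> W" using less.prems(3) .
      show ?thesis
      proof (cases "y \<in> W")
        case True
        have len: "length (y#r) < length xs" using xs by simp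
        have h1: "hd (y#r) \<in> W" using True by simp
        have h2: "last (y#r) \<in> W" using lastxs xs by simp
        obtain ys' where ys': "walk W (induced E W) ys'" "hd ys' = hd (y#r)" "last ys' = last (y#r)"
          "length ys' \<le> length (y#r)"
          using less.hyps[OF len xy(3) h1 h2] by blast
        obtain t' where t': "ys' = y # t'" using ys'(2) walk_nonempty[OF ys'(1)] by (cases ys') auto
        have "induced E W x y" using xW True xy(2) by (simp add: induced_def)
        then have "walk W (induced E W) (x#ys')" using ys'(1) t' xW by simp
        moreover have "last (x#ys') = last xs" using ys'(3) t' xs by simp
        moreover have "length (x#ys') \<le> length xs" using ys'(4) xs by simp
        moreover have "hd (x#ys') = hd xs" using xs by simp
        ultimately show ?thesis by blast
      next
        case False
        have yV: "y \<in> V" using xy(3) by (simp add: walk_def)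
        then have ly: "leaf V E y" using nl False by blast
        have "r \<noteq> []" using False lastxs xs by auto
        then obtain z r' where r: "r = z#r'" by (cases r) auto
        have "E y z" using xy(3) r by simp
        moreover have "E y x" using xy(2) g by (auto simp: graph_def)
        ultimately have "z = x" using leaf_unique[OF g ly] by blast
        have w: "walk V E (x#r')" using xy(3) r \<open>z = x\<close> by simp
        have len: "length (x#r') < length xs" using xs r by simp
        have h1: "hd (x#r') \<in> W" using xW by simp
        have h2: "last (x#r') \<in> W" using lastxs xs r \<open>z = x\<close> by simp
        obtain ys where ys: "walk W (induced E W) ys" "hd ys = hd (x#r')" "last ys = last (x#r')"
          "length ys \<le> length (x#r')"
          using less.hyps[OF len w h1 h2] by blast
        have "hd ys = hd xs" "last ys = last xs" "length ys \<le> length xs"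
          using ys(2,3,4) xs r \<open>z = x\<close> by simp_all
        then show ?thesis using ys(1) by blast
      qed
    qed
  qed
qed

lemma gdist_W:
  assumes g: "graph V E" and c: "gconnected V E" and WV: "W \<subseteq> V"
    and nl: "\<forall>v\<in>V. \<not> leaf V E v \<longrightarrow> v \<in> W" and u: "u \<in> W" and v: "v \<in> W"
  shows "gdist W (induced E W) u v = gdist V E u v"
proof -
  have uV: "u \<in> V" "v \<in> V" using u v WV by auto
  obtain n where "dwalk V E u v n" using dwalk_exists[OF c uV] by blast
  then have "dwalk V E u v (gdist V E u v)" by (rule dwalk_gdist)
  then obtain xs where xs: "walk V E xs" "hd xs = u" "last xs = v" "length xs = Suc (gdist V E u v)"
    unfolding dwalk_def by blast
  have "hd xs \<in> W" "last xs \<in> W" using xs u v by simp_all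
  then obtain ys where ys: "walk W (induced E W) ys" "hd ys = hd xs" "last ys = last xs"
    "length ys \<le> length xs"
    using walk_to_W[OF g WV nl xs(1)] by blast
  have "length ys = Suc (length ys - 1)" using walk_nonempty[OF ys(1)] by (cases ys) simp_all
  then have dW: "dwalk W (induced E W) u v (length ys - 1)"
    unfolding dwalk_def using ys xs by blast
  then have "gdist W (induced E W) u v \<le> length ys - 1" by (rule gdist_le)
  then have le1: "gdist W (induced E W) u v \<le> gdist V E u v" using ys(4) xs(4) by linarith
  have "dwalk W (induced E W) u v (gdist W (induced E W) u v)"
    using dW by (rule dwalk_gdist)
  then obtain zs where zs: "walk W (induced E W) zs" "hd zs = u" "last zs = v"
    "length zs = Suc (gdist W (induced E W) u v)"
    unfolding dwalk_def by blast
  have "walk V E zs" using walk_induced_mono[OF zs(1) WV] .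
  then have "dwalk V E u v (gdist W (induced E W) u v)"
    unfolding dwalk_def using zs by blast
  then have "gdist V E u v \<le> gdist W (induced E W) u v" by (rule gdist_le)
  then show ?thesis using le1 by simp
qed

lemma push:
  assumes g: "graph V E" and c: "gconnected V E" and V3: "card V \<ge> 3"
    and AV: "A \<subseteq> V" and nlA: "\<forall>v\<in>V. \<not> leaf V E v \<longrightarrow> v \<in> A"
    and tw: "\<forall>u s. leaf V E u \<longrightarrow> E u s \<longrightarrow> (\<exists>l\<in>A. leaf V E l \<and> E l s)"
    and fk: "\<forall>v\<in>V. f v \<le> k" and f0: "\<forall>v\<in>V. v \<notin> A \<longrightarrow> f v = 0"
    and dom: "\<forall>u\<in>A. \<exists>v\<in>V. 1 \<le> f v \<and> gdist V E u v \<le> f v"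
  shows "\<exists>g. dominating_k_broadcast V E k g \<and> (\<forall>v. g v \<noteq> 0 \<longrightarrow> v \<in> A \<and> \<not> leaf V E v)
            \<and> sum g A \<le> sum f A"
proof -
  define S where "S v = {l\<in>A. leaf V E l \<and> E l v}" for v
  define h where "h v = (if v \<in> A \<and> \<not> leaf V E v then min k (f v + sum f (S v)) else 0)" for v
  have finV: "finite V" using g by (simp add: graph_def)
  have finA: "finite A" using finV AV finite_subset by blast
  have finS: "finite (S v)" for v using finA unfolding S_def by simp
  have sym: "E a b \<Longrightarrow> E b a" for a b using g by (auto simp: graph_def)
  have inV: "E a b \<Longrightarrow> a \<in> V \<and> b \<in> V" for a b using g by (auto simp: graph_def)
  have K1: "f v \<le> h v" if "v \<in> A" "\<not> leaf V E v" for v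
    using that fk AV unfolding h_def by auto
  have K2: "f v \<le> h s \<and> s \<in> A \<and> \<not> leaf V E s" if "v \<in> A" "leaf V E v" "E v s" for v s
  proof -
    have ns: "\<not> leaf V E s" using leaf_nbr_not_leaf[OF g c V3 that(2,3)] .
    have sA: "s \<in> A" using nlA ns inV[OF that(3)] by blast
    have "v \<in> S s" using that unfolding S_def by simp
    then have "f v \<le> sum f (S s)" using finS by (simp add: member_le_sum)
    then show ?thesis using ns sA fk AV that unfolding h_def by auto
  qed
  have hk: "\<forall>v\<in>V. h v \<le> k" unfolding h_def by auto
  have domh: "\<exists>v\<in>V. 1 \<le> h v \<and> gdist V E u v \<le> h v" if uV: "u \<in> V" for u
  proof (cases "leaf V E u")
    case False
    then have uA: "u \<in> A" using nlA uV by blast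
    obtain v where v: "v \<in> V" "1 \<le> f v" "gdist V E u v \<le> f v" using dom uA by blast
    have vA: "v \<in> A" using f0 v(1) v(2) by (metis not_one_le_zero)
    show ?thesis
    proof (cases "leaf V E v")
      case False then show ?thesis using K1[OF vA] v by (meson le_trans)
    next
      case True
      obtain s where s: "E v s" using leaf_has_nbr[OF True] by blast
      have "u \<noteq> v" using True False by blast
      have "gdist V E u v = Suc (gdist V E u s)"
        using leaf_dist[OF g c True s uV] \<open>u \<noteq> v\<close> gdist_sym[OF g] by metis
      then show ?thesis using K2[OF vA True s] v inV[OF s] by (intro bexI[of _ s]) auto
    qed
  next
    case True
    obtain s where s: "E u s" using leaf_has_nbr[OF True] by blast
    obtain l where l: "l \<in> A" "leaf V E l" "E l s" using tw True s by blast
    obtain v where v: "v \<in> V" "1 \<le> f v" "gdist V E l v \<le> f v" using dom l(1) by blast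
    have vA: "v \<in> A" using f0 v(1) v(2) by (metis not_one_le_zero)
    have sV: "s \<in> V" using inV[OF s] by blast
    have lV: "l \<in> V" using inV[OF l(3)] by blast
    have us: "gdist V E u s \<le> 1" using gdist_edge[OF g s] .
    have key: "gdist V E u x \<le> gdist V E l x" if "x \<in> V" "x \<noteq> l" for x
    proof -
      have "gdist V E u x \<le> gdist V E u s + gdist V E s x" using gdist_triangle[OF c uV sV that(1)] .
      also have "\<dots> \<le> Suc (gdist V E s x)" using us by simp
      also have "\<dots> = gdist V E l x" using leaf_dist[OF g c l(2) l(3) that] by simp
      finally show ?thesis .
    qed
    show ?thesis
    proof (cases "leaf V E v")
      case False
      then have "v \<noteq> l" using l(2) by blast
      then show ?thesis using key[OF v(1)] K1[OF vA False] v by (intro bexI[of _ v]) auto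
    next
      case lv: True
      show ?thesis
      proof (cases "v = l")
        case True
        then show ?thesis using K2[OF vA lv, of s] l us v sV by (intro bexI[of _ s]) auto
      next
        case False
        obtain s' where s': "E v s'" using leaf_has_nbr[OF lv] by blast
        have K: "f v \<le> h s'" "\<not> leaf V E s'" using K2[OF vA lv s'] by auto
        have s'V: "s' \<in> V" using inV[OF s'] by blast
        have "s' \<noteq> l" using K(2) l(2) by blast
        have "gdist V E u s' \<le> gdist V E l s'" using key[OF s'V \<open>s' \<noteq> l\<close>] .
        also have "\<dots> \<le> gdist V E l v"
          using leaf_dist[OF g c lv s' lV] False gdist_sym[OF g] by (metis le_SucI order_refl)
        finally show ?thesis using K v s'V by (intro bexI[of _ s']) auto
      qed
    qed
  qed
  have domk: "dominating_k_broadcast V E k h"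
    unfolding dominating_k_broadcast_def using hk domh by blast
  have supp: "\<forall>v. h v \<noteq> 0 \<longrightarrow> v \<in> A \<and> \<not> leaf V E v" unfolding h_def by auto
  define N where "N = {v\<in>A. \<not> leaf V E v}"
  define L where "L = {v\<in>A. leaf V E v}"
  have AN: "A = N \<union> L" "N \<inter> L = {}" unfolding N_def L_def by auto
  have finN: "finite N" "finite L" using finA unfolding N_def L_def by auto
  have "sum h A = sum h N + sum h L" using AN finN sum.union_disjoint by metis
  also have "sum h L = 0" unfolding L_def h_def by simp
  also have "sum h N \<le> (\<Sum>v\<in>N. f v + sum f (S v))"
    by (rule sum_mono) (simp add: h_def N_def)
  also have "\<dots> = sum f N + (\<Sum>v\<in>N. sum f (S v))" by (simp add: sum.distrib)
  also have "(\<Sum>v\<in>N. sum f (S v)) = (\<Sum>v\<in>N. sum f {l. l \<in> L \<and> E l v})"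
    by (rule sum.cong) (auto simp: S_def L_def)
  also have "\<dots> = (\<Sum>l\<in>L. sum (\<lambda>v. f l) {v. v \<in> N \<and> E l v})"
    using sum.swap_restrict[OF finN(1) finN(2), of "\<lambda>v l. f l" "\<lambda>v l. E l v"] by simp
  also have "\<dots> = (\<Sum>l\<in>L. f l)"
  proof (rule sum.cong)
    fix l assume lL: "l \<in> L"
    then have ll: "leaf V E l" "l \<in> A" unfolding L_def by auto
    obtain s where s: "E l s" using leaf_has_nbr[OF ll(1)] by blast
    have "\<not> leaf V E s" using leaf_nbr_not_leaf[OF g c V3 ll(1) s] .
    then have "s \<in> N" using nlA inV[OF s] unfolding N_def by blast
    then have "{v. v \<in> N \<and> E l v} = {s}" using s leaf_unique[OF g ll(1) s] by blast
    then show "sum (\<lambda>v. f l) {v. v \<in> N \<and> E l v} = f l" by simp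
  qed simp
  also have "sum f N + sum f L = sum f A" using AN finN sum.union_disjoint by metis
  finally have "sum h A \<le> sum f A" by simp
  then show ?thesis using domk supp by blast
qed

lemma gamma_le: "dominating_k_broadcast V E k g \<Longrightarrow> gamma_Bk V E k \<le> broadcast_cost V g"
proof -
  assume "dominating_k_broadcast V E k g"
  then have "\<exists>f. dominating_k_broadcast V E k f \<and> broadcast_cost V f = broadcast_cost V g" by blast
  then show ?thesis unfolding gamma_Bk_def by (rule Least_le)
qed

lemma gamma_att: "dominating_k_broadcast V E k g \<Longrightarrow>
   \<exists>f. dominating_k_broadcast V E k f \<and> broadcast_cost V f = gamma_Bk V E k"
proof -
  assume "dominating_k_broadcast V E k g"
  then have "\<exists>c f. dominating_k_broadcast V E k f \<and> broadcast_cost V f = c" by blast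
  then show ?thesis unfolding gamma_Bk_def by (rule LeastI_ex)
qed

lemma const_dom: "1 \<le> k \<Longrightarrow> dominating_k_broadcast V E k (\<lambda>_. 1)"
proof -
  assume k: "1 \<le> k"
  have "\<exists>v\<in>V. 1 \<le> (1::nat) \<and> gdist V E u v \<le> 1" if "u \<in> V" for u
    using that gdist_refl[OF that, of E] by (intro bexI[of _ u]) simp_all
  then show ?thesis unfolding dominating_k_broadcast_def using k by simp
qed

theorem proposition2:
  fixes V W :: "'a set" and E :: "'a \<Rightarrow> 'a \<Rightarrow> bool" and k :: nat
  assumes "tree V E" and "card V \<ge> 3"
    and "twin_free_vertices V E W"
    and "k \<ge> 1"
  shows "gamma_Bk V E k = gamma_Bk W (induced E W) k"
proof -
  have g: "graph V E" and c: "gconnected V E" using assms(1) by (auto simp: tree_def)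
  have V3: "card V \<ge> 3" by fact
  have WV: "W \<subseteq> V" and nlW: "\<forall>v\<in>V. \<not> leaf V E v \<longrightarrow> v \<in> W"
    using assms(3) by (auto simp: twin_free_vertices_def)
  have finV: "finite V" using g by (simp add: graph_def)
  have inV: "E a b \<Longrightarrow> a \<in> V \<and> b \<in> V" for a b using g by (auto simp: graph_def)
  have twW: "\<forall>u s. leaf V E u \<longrightarrow> E u s \<longrightarrow> (\<exists>l\<in>W. leaf V E l \<and> E l s)"
  proof (intro allI impI)
    fix u s assume "leaf V E u" "E u s"
    then have "support_vertex V E s" using inV unfolding support_vertex_def by blast
    then show "\<exists>l\<in>W. leaf V E l \<and> E l s" using assms(3) unfolding twin_free_vertices_def by blast
  qed
  have twV: "\<forall>u s. leaf V E u \<longrightarrow> E u s \<longrightarrow> (\<exists>l\<in>V. leaf V E l \<and> E l s)"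
    using inV by blast
  have dW: "gdist W (induced E W) u v = gdist V E u v" if "u \<in> W" "v \<in> W" for u v
    using gdist_W[OF g c WV nlW that] .
  have le1: "gamma_Bk W (induced E W) k \<le> gamma_Bk V E k"
  proof -
    obtain f where f: "dominating_k_broadcast V E k f" "broadcast_cost V f = gamma_Bk V E k"
      using gamma_att[OF const_dom[OF assms(4)]] by blast
    have nlV: "\<forall>v\<in>V. \<not> leaf V E v \<longrightarrow> v \<in> V" by blast
    have fk: "\<forall>v\<in>V. f v \<le> k" using f(1) unfolding dominating_k_broadcast_def by blast
    have f0: "\<forall>v\<in>V. v \<notin> V \<longrightarrow> f v = 0" by blast
    have dom: "\<forall>u\<in>V. \<exists>v\<in>V. 1 \<le> f v \<and> gdist V E u v \<le> f v"
      using f(1) unfolding dominating_k_broadcast_def by blast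
    obtain h where h: "dominating_k_broadcast V E k h" "\<forall>v. h v \<noteq> 0 \<longrightarrow> v \<in> V \<and> \<not> leaf V E v"
      "sum h V \<le> sum f V"
      using push[OF g c V3 order_refl nlV twV fk f0 dom] by blast
    have "dominating_k_broadcast W (induced E W) k h"
      unfolding dominating_k_broadcast_def
    proof (intro conjI ballI)
      fix v assume "v \<in> W" then show "h v \<le> k" using h(1) WV unfolding dominating_k_broadcast_def by blast
    next
      fix u assume uW: "u \<in> W"
      then obtain v where v: "v \<in> V" "1 \<le> h v" "gdist V E u v \<le> h v"
        using h(1) WV unfolding dominating_k_broadcast_def by blast
      then have "h v \<noteq> 0" by simp
      then have "v \<in> W" using h(2) nlW by blast
      then show "\<exists>v\<in>W. 1 \<le> h v \<and> gdist W (induced E W) u v \<le> h v"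
        using v(2,3) dW[OF uW \<open>v \<in> W\<close>] by (intro bexI[of _ v]) simp_all
    qed
    then have "gamma_Bk W (induced E W) k \<le> broadcast_cost W h" by (rule gamma_le)
    then have "gamma_Bk W (induced E W) k \<le> sum h W" by (simp add: broadcast_cost_def)
    also have "sum h W = sum h V"
      by (rule sum.mono_neutral_left[OF finV WV]) (use h(2) nlW in blast)
    finally have "gamma_Bk W (induced E W) k \<le> sum h V" .
    then show ?thesis using h(3) f(2) unfolding broadcast_cost_def by linarith
  qed
  have le2: "gamma_Bk V E k \<le> gamma_Bk W (induced E W) k"
  proof -
    obtain f where f: "dominating_k_broadcast W (induced E W) k f"
      "broadcast_cost W f = gamma_Bk W (induced E W) k"
      using gamma_att[OF const_dom[OF assms(4)]] by blast
    define f' where "f' v = (if v \<in> W then f v else 0)" for v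
    have fk: "\<forall>v\<in>V. f' v \<le> k" using f(1) unfolding f'_def dominating_k_broadcast_def by auto
    have f0: "\<forall>v\<in>V. v \<notin> W \<longrightarrow> f' v = 0" unfolding f'_def by simp
    have dom: "\<forall>u\<in>W. \<exists>v\<in>V. 1 \<le> f' v \<and> gdist V E u v \<le> f' v"
    proof
      fix u assume uW: "u \<in> W"
      then obtain v where v: "v \<in> W" "1 \<le> f v" "gdist W (induced E W) u v \<le> f v"
        using f(1) unfolding dominating_k_broadcast_def by blast
      then show "\<exists>v\<in>V. 1 \<le> f' v \<and> gdist V E u v \<le> f' v"
        using dW[OF uW v(1)] WV unfolding f'_def by (intro bexI[of _ v]) auto
    qed
    obtain h where h: "dominating_k_broadcast V E k h" "\<forall>v. h v \<noteq> 0 \<longrightarrow> v \<in> W \<and> \<not> leaf V E v"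
      "sum h W \<le> sum f' W"
      using push[OF g c V3 WV nlW twW fk f0 dom] by blast
    have "gamma_Bk V E k \<le> broadcast_cost V h" using h(1) by (rule gamma_le)
    then have "gamma_Bk V E k \<le> sum h V" by (simp add: broadcast_cost_def)
    also have "sum h V = sum h W"
      by (rule sum.mono_neutral_right[OF finV WV]) (use h(2) in blast)
    finally have "gamma_Bk V E k \<le> sum h W" .
    moreover have "sum f' W = sum f W" unfolding f'_def by simp
    ultimately show ?thesis using h(3) f(2) unfolding broadcast_cost_def by linarith
  qed
  show ?thesis using le1 le2 by simp
qed


end
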